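(* In the setting below, suppose $M$ has constant sectional curvature $K$. A natural SU(2)-structure on $\mathcal S$ with $\tilde\theta=-2\theta$ and $\omega_1=d\theta$ is nearly-hypo if and only if there are real numbers $b_0,b_1,b_2$ with $$b_1^2-b_0b_2=1,\qquad (b_0+s^2Kb_2)^2+4s^2K=36s^4,\qquad K>-\frac{b_0^2}{s^2(1+b_1^2)},$$ such that $$\omega_2=b_0\alpha_0+b_1\alpha_1+b_2\alpha_2,\qquad \omega_3=\frac{Kb_1}{3}\alpha_0+\frac{s^2Kb_2-b_0}{6s^2}\alpha_1-\frac{b_1}{3s^2}\alpha_2 ;$$ and conversely every such triple $(b_0,b_1,b_2)$ gives a natural SU(2)-structure of this form. Every such nearly-hypo structure is also contact-hypo, hence double-hypo. Such a structure is compatible with the canonical metric if and only if either (i) $b_2=-b_0$, $b_1\neq0$, $b_0^2+b_1^2=1$ and $K=3=s^{-2}$; or (ii) $b_2=-b_0=\pm1$, $b_1=0$ and $s^2K+1=6s^2$.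
   Context: Let $(M,g)$ be a connected oriented Riemannian 3-manifold, $s>0$, and $\mathcal S=\{u\in TM:\|u\|=s\}$ the total space of the radius-$s$ tangent sphere bundle with the canonical metric (induced by the Sasaki metric). An adapted frame at $u\in\mathcal S$: take a positively oriented orthonormal frame $(f_0=u/s,f_1,f_2)$ of $T_{\pi(u)}M$ and set $e_0=f_0^h,e_1=f_1^h,e_2=f_2^h,e_3=f_1^v,e_4=f_2^v$ (horizontal and vertical lifts); dual coframe $e^0,\dots,e^4$, $e^{ij}=e^i\wedge e^j$. Globally defined forms: $\theta=s\,e^0$, $\alpha_0=e^{12}$, $\alpha_1=e^{14}-e^{23}$, $\alpha_2=e^{34}$, $d\theta=e^{31}+e^{42}$; $\alpha_i\wedge d\theta=0$, $\alpha_0\wedge\alpha_1=\alpha_2\wedge\alpha_1=0$, $\alpha_0\wedge\alpha_2=-\frac12\alpha_1\wedge\alpha_1=-\frac12 d\theta\wedge d\theta=e^{1234}$. For constant sectional curvature $K$: $d\alpha_0=s^{-2}\theta\wedge\alpha_1$, $d\alpha_1=2s^{-2}\theta\wedge\alpha_2-2K\theta\wedge\alpha_0$, $d\alpha_2=-K\theta\wedge\alpha_1$. An SU(2)-structure: $(\tilde\theta,\omega_1,\omega_2,\omega_3)$ with (C1) $\tilde\theta\wedge\omega_1\wedge\omega_1\neq0$, $\omega_i\wedge\omega_j=0$ ($i\ne j$), $\omega_1\wedge\omega_1=\omega_2\wedge\omega_2=\omega_3\wedge\omega_3=2v$, $v$ nowhere zero; (C2) $x\lrcorner\omega_1=y\lrcorner\omega_2\Rightarrow\omega_3(x,y)\ge0$.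 Metric on $\ker\tilde\theta$: $g_{SU(2)}$ with $x\lrcorner\omega_1\wedge y\lrcorner\omega_2\wedge\omega_3=g_{SU(2)}(x,y)\,v$. Hypo: $d\omega_1=0$, $d(\tilde\theta\wedge\omega_2)=d(\tilde\theta\wedge\omega_3)=0$. Nearly-hypo: $d\omega_2=3\tilde\theta\wedge\omega_3$, $d(\tilde\theta\wedge\omega_1)=-2\omega_1\wedge\omega_1$. Double-hypo: hypo and nearly-hypo. Contact-hypo: $d\tilde\theta=-2\omega_1$, $d(\tilde\theta\wedge\omega_2)=d(\tilde\theta\wedge\omega_3)=0$. Natural SU(2)-structure on $\mathcal S$: $\tilde\theta=-2p\theta$ ($p\ne0$ constant), each $\omega_i$ a constant-coefficient combination of $\alpha_0,\alpha_1,\alpha_2,d\theta$. Compatible with the canonical metric: $g_{SU(2)}$ equals the canonical metric on $\ker\theta$. *)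

theory Defs
  imports Complex_Main
begin

text \<open>Pointwise (fibrewise) model of the exterior algebra of the 5-dimensional tangent
space of the tangent sphere bundle, in the adapted coframe e^0,...,e^4.
A form is given by its coefficients: the coefficient of e^{i_1 ... i_k} (i_1 < ... < i_k)
is the value at the set {i_1,...,i_k}; only subsets of {0..<5} are relevant.
Tangent vectors are given by their components x 0, ..., x 4 w.r.t. e_0,...,e_4.\<close>

type_synonym form = "nat set \<Rightarrow> real"
type_synonym tvec = "nat \<Rightarrow> real"

definition fzero :: form where "fzero = (\<lambda>I. 0)"
definition fadd :: "form \<Rightarrow> form \<Rightarrow> form" where "fadd a b = (\<lambda>I. a I + b I)"
definition fsub :: "form \<Rightarrow> form \<Rightarrow> form" where "fsub a b = (\<lambda>I. a I - b I)"
definition sc :: "real \<Rightarrow> form \<Rightarrow> form" where "sc c a = (\<lambda>I. c * a I)"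

text \<open>Shuffle sign: e^J \<and> e^L = shsgn J L * e^(J \<union> L) for disjoint J, L.\<close>
definition shsgn :: "nat set \<Rightarrow> nat set \<Rightarrow> real" where
  "shsgn J L = (-1) ^ card {(j, l). j \<in> J \<and> l \<in> L \<and> l < j}"

definition wedge :: "form \<Rightarrow> form \<Rightarrow> form" where
  "wedge a b = (\<lambda>I. if I \<subseteq> {0..<5}
      then (\<Sum>J\<in>Pow I. shsgn J (I - J) * a J * b (I - J)) else 0)"

definition interior :: "tvec \<Rightarrow> form \<Rightarrow> form" where
  "interior x \<omega> = (\<lambda>I. if I \<subseteq> {0..<5}
      then (\<Sum>i\<in>{0..<5} - I. shsgn {i} I * x i * \<omega> (insert i I)) else 0)"

definition eval1 :: "form \<Rightarrow> tvec \<Rightarrow> real" where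
  "eval1 \<beta> x = interior x \<beta> {}"
definition eval2 :: "form \<Rightarrow> tvec \<Rightarrow> tvec \<Rightarrow> real" where
  "eval2 \<omega> x y = interior y (interior x \<omega>) {}"

text \<open>Canonical metric: the adapted frame e_0,...,e_4 is orthonormal.\<close>
definition can_metric :: "tvec \<Rightarrow> tvec \<Rightarrow> real" where
  "can_metric x y = (\<Sum>i<5. x i * y i)"

definition eb :: "nat \<Rightarrow> form" where "eb i = (\<lambda>I. if I = {i} then 1 else 0)"

definition theta :: "real \<Rightarrow> form" where "theta s = sc s (eb 0)"
definition alpha0 :: form where "alpha0 = wedge (eb 1) (eb 2)"
definition alpha1 :: form where "alpha1 = fsub (wedge (eb 1) (eb 4)) (wedge (eb 2) (eb 3))"
definition alpha2 :: form where "alpha2 = wedge (eb 3) (eb 4)"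
definition dtheta :: form where "dtheta = fadd (wedge (eb 3) (eb 1)) (wedge (eb 4) (eb 2))"

type_synonym coeffs = "real \<times> real \<times> real \<times> real"

definition nat2 :: "coeffs \<Rightarrow> form" where
  "nat2 c = (case c of (c0, c1, c2, c3) \<Rightarrow>
     fadd (fadd (sc c0 alpha0) (sc c1 alpha1)) (fadd (sc c2 alpha2) (sc c3 dtheta)))"

text \<open>Exterior derivative of such a combination, for constant sectional curvature K
(structure equations; d(d theta) = 0).\<close>
definition dnat2 :: "real \<Rightarrow> real \<Rightarrow> coeffs \<Rightarrow> form" where
  "dnat2 s K c = (case c of (c0, c1, c2, c3) \<Rightarrow>
     fadd (fadd (sc (c0 / s\<^sup>2) (wedge (theta s) alpha1))
                (sc c1 (fsub (sc (2 / s\<^sup>2) (wedge (theta s) alpha2)) (sc (2 * K) (wedge (theta s) alpha0)))))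
          (sc (- c2 * K) (wedge (theta s) alpha1)))"

definition ttheta :: "real \<Rightarrow> real \<Rightarrow> form" where "ttheta s p = sc (-2 * p) (theta s)"
definition dttheta :: "real \<Rightarrow> form" where "dttheta p = sc (-2 * p) dtheta"

text \<open>d(tilde theta \<and> omega) = d tilde theta \<and> omega - tilde theta \<and> d omega.\<close>
definition dtw :: "real \<Rightarrow> real \<Rightarrow> real \<Rightarrow> coeffs \<Rightarrow> form" where
  "dtw s K p c = fsub (wedge (dttheta p) (nat2 c)) (wedge (ttheta s p) (dnat2 s K c))"

definition su2 :: "form \<Rightarrow> form \<Rightarrow> form \<Rightarrow> form \<Rightarrow> bool" where
  "su2 tt w1 w2 w3 \<longleftrightarrow>
     wedge tt (wedge w1 w1) \<noteq> fzero \<and>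
     wedge w1 w2 = fzero \<and> wedge w2 w1 = fzero \<and>
     wedge w1 w3 = fzero \<and> wedge w3 w1 = fzero \<and>
     wedge w2 w3 = fzero \<and> wedge w3 w2 = fzero \<and>
     wedge w1 w1 = wedge w2 w2 \<and> wedge w2 w2 = wedge w3 w3 \<and>
     sc (1/2) (wedge w1 w1) \<noteq> fzero \<and>
     (\<forall>x y. interior x w1 = interior y w2 \<longrightarrow> eval2 w3 x y \<ge> 0)"

definition nat_su2 :: "real \<Rightarrow> real \<Rightarrow> coeffs \<Rightarrow> coeffs \<Rightarrow> coeffs \<Rightarrow> bool" where
  "nat_su2 s p a b c \<longleftrightarrow> p \<noteq> 0 \<and> su2 (ttheta s p) (nat2 a) (nat2 b) (nat2 c)"

definition hypo :: "real \<Rightarrow> real \<Rightarrow> real \<Rightarrow> coeffs \<Rightarrow> coeffs \<Rightarrow> coeffs \<Rightarrow> bool" where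
  "hypo s K p a b c \<longleftrightarrow> dnat2 s K a = fzero \<and> dtw s K p b = fzero \<and> dtw s K p c = fzero"

definition nearly_hypo :: "real \<Rightarrow> real \<Rightarrow> real \<Rightarrow> coeffs \<Rightarrow> coeffs \<Rightarrow> coeffs \<Rightarrow> bool" where
  "nearly_hypo s K p a b c \<longleftrightarrow>
     dnat2 s K b = sc 3 (wedge (ttheta s p) (nat2 c)) \<and>
     dtw s K p a = sc (-2) (wedge (nat2 a) (nat2 a))"

definition double_hypo :: "real \<Rightarrow> real \<Rightarrow> real \<Rightarrow> coeffs \<Rightarrow> coeffs \<Rightarrow> coeffs \<Rightarrow> bool" where
  "double_hypo s K p a b c \<longleftrightarrow> hypo s K p a b c \<and> nearly_hypo s K p a b c"

definition contact_hypo :: "real \<Rightarrow> real \<Rightarrow> real \<Rightarrow> coeffs \<Rightarrow> coeffs \<Rightarrow> coeffs \<Rightarrow> bool" where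
  "contact_hypo s K p a b c \<longleftrightarrow>
     dttheta p = sc (-2) (nat2 a) \<and> dtw s K p b = fzero \<and> dtw s K p c = fzero"

text \<open>Compatibility: g_SU(2) equals the canonical metric on ker tilde theta, where
x \<lrcorner> w1 \<and> y \<lrcorner> w2 \<and> w3 = g_SU(2)(x,y) v and v = w1 \<and> w1 / 2.\<close>
definition compatible :: "real \<Rightarrow> real \<Rightarrow> coeffs \<Rightarrow> coeffs \<Rightarrow> coeffs \<Rightarrow> bool" where
  "compatible s p a b c \<longleftrightarrow>
     (\<forall>x y. eval1 (ttheta s p) x = 0 \<and> eval1 (ttheta s p) y = 0 \<longrightarrow>
        wedge (wedge (interior x (nat2 a)) (interior y (nat2 b))) (nat2 c)
          = sc (can_metric x y) (sc (1/2) (wedge (nat2 a) (nat2 a))))"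

end

theory Submission
  imports Defs
begin

fun lc :: "(nat set \<times> real) list \<Rightarrow> form" where
  "lc [] I = 0"
| "lc ((J,c)#xs) I = (if I = J then c else 0) + lc xs I"

lemma fzero_lc: "fzero = lc []" by (auto simp: fzero_def)

lemma fadd_lc0: "lc xs I + lc ys I = lc (xs @ ys) I"
  by (induction xs I rule: lc.induct) auto
lemma fadd_lc: "fadd (lc xs) (lc ys) = lc (xs @ ys)"
  unfolding fadd_def by (rule ext, rule fadd_lc0)

lemma sc_lc0: "k * lc xs I = lc (map (\<lambda>(J,c). (J, k*c)) xs) I"
  by (induction xs I rule: lc.induct) (auto simp: algebra_simps)
lemma sc_lc: "sc k (lc xs) = lc (map (\<lambda>(J,c). (J, k*c)) xs)"
  unfolding sc_def by (rule ext, rule sc_lc0)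

lemma neg_lc0: "- lc xs I = lc (map (\<lambda>(J,c). (J, -c)) xs) I"
  by (induction xs I rule: lc.induct) (auto simp: algebra_simps)
lemma neg_lc: "(\<lambda>I. - lc xs I) = lc (map (\<lambda>(J,c). (J, -c)) xs)"
  by (rule ext, rule neg_lc0)

lemma fsub_lc: "fsub (lc xs) (lc ys) = lc (xs @ map (\<lambda>(J,c). (J, -c)) ys)"
proof -
  have "fsub (lc xs) (lc ys) = fadd (lc xs) (\<lambda>I. - lc ys I)" by (simp add: fsub_def fadd_def)
  then show ?thesis by (simp add: neg_lc fadd_lc)
qed

lemma eb_lc: "eb i = lc [({i},1)]" by (auto simp: eb_def)

lemma lc_sum: "lc xs I = (\<Sum>(J,c)\<leftarrow>xs. if I = J then c else 0)"
  by (induction xs I rule: lc.induct) auto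

lemma lc_zero_out: "I \<notin> fst ` set xs \<Longrightarrow> lc xs I = 0"
  by (induction xs I rule: lc.induct) auto

lemma lc_eq_iff: "lc xs = lc ys \<longleftrightarrow> (\<forall>I\<in>set (map fst (xs @ ys)). lc xs I = lc ys I)"
proof
  assume h: "\<forall>I\<in>set (map fst (xs @ ys)). lc xs I = lc ys I"
  show "lc xs = lc ys"
  proof
    fix I show "lc xs I = lc ys I"
      using h lc_zero_out[of I xs] lc_zero_out[of I ys] by (cases "I \<in> fst ` set (xs @ ys)") (auto simp: image_Un)
  qed
qed auto

declare lc.simps[simp del]

lemma lc_append: "lc (xs @ ys) I = lc xs I + lc ys I"
  using fadd_lc0 by simp

lemma lc_concat: "lc (concat (map f l)) I = (\<Sum>i\<leftarrow>l. lc (f i) I)"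
  by (induction l) (auto simp: lc_append lc.simps)

lemma wedge_fadd1: "wedge (fadd a a') b = fadd (wedge a b) (wedge a' b)"
  by (rule ext) (simp add: wedge_def fadd_def algebra_simps sum.distrib)
lemma wedge_fadd2: "wedge b (fadd a a') = fadd (wedge b a) (wedge b a')"
  by (rule ext) (simp add: wedge_def fadd_def algebra_simps sum.distrib)
lemma wedge_zero1: "wedge fzero b = fzero"
  by (rule ext) (simp add: wedge_def fzero_def)
lemma wedge_zero2: "wedge b fzero = fzero"
  by (rule ext) (simp add: wedge_def fzero_def)

definition wterm :: "nat set \<Rightarrow> real \<Rightarrow> nat set \<Rightarrow> real \<Rightarrow> (nat set \<times> real) list" where
  "wterm J c L d = (if J \<inter> L = {} \<and> J \<union> L \<subseteq> {0..<5} then [(J \<union> L, shsgn J L * c * d)] else [])"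

lemma wedge_mono: "wedge (lc [(J,c)]) (lc [(L,d)]) = lc (wterm J c L d)"
proof (rule ext)
  fix I
  have "wedge (lc [(J,c)]) (lc [(L,d)]) I = (if I \<subseteq> {0..<5} then
     (\<Sum>K\<in>Pow I. if K = J then (if I - K = L then shsgn K (I - K) * c * d else 0) else 0) else 0)"
    by (auto simp: wedge_def lc.simps intro!: sum.cong)
  also have "\<dots> = (if I \<subseteq> {0..<5} \<and> J \<subseteq> I \<and> I - J = L then shsgn J L * c * d else 0)"
  proof (cases "I \<subseteq> {0..<5}")
    case True
    then have "finite I" using finite_subset by blast
    then show ?thesis using True by (simp add: sum.delta)
  qed simp
  also have "\<dots> = lc (wterm J c L d) I"
    by (auto simp: wterm_def lc.simps)
  finally show "wedge (lc [(J,c)]) (lc [(L,d)]) I = lc (wterm J c L d) I" .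
qed

lemma lc_Cons_fadd: "lc (x # xs) = fadd (lc [x]) (lc xs)"
  by (simp add: fadd_lc)

definition wl :: "(nat set \<times> real) list \<Rightarrow> (nat set \<times> real) list \<Rightarrow> (nat set \<times> real) list" where
  "wl xs ys = concat (map (\<lambda>(J,c). concat (map (\<lambda>(L,d). wterm J c L d) ys)) xs)"

lemma wedge_lc1: "wedge (lc [(J,c)]) (lc ys) = lc (concat (map (\<lambda>(L,d). wterm J c L d) ys))"
proof (induction ys)
  case Nil then show ?case by (simp add: fzero_lc[symmetric] wedge_zero2)
next
  case (Cons y ys)
  obtain L d where y: "y = (L,d)" by (cases y)
  show ?case
  proof -
    have e: "lc ((L,d)#ys) = fadd (lc [(L,d)]) (lc ys)" by (simp add: fadd_lc)
    show ?thesis unfolding y e wedge_fadd2 Cons wedge_mono by (simp add: fadd_lc)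
  qed
qed

lemma wedge_lc: "wedge (lc xs) (lc ys) = lc (wl xs ys)"
proof (induction xs)
  case Nil then show ?case by (simp add: wl_def fzero_lc[symmetric] wedge_zero1)
next
  case (Cons x xs)
  obtain J c where x: "x = (J,c)" by (cases x)
  show ?case
  proof -
    have e: "lc ((J,c)#xs) = fadd (lc [(J,c)]) (lc xs)" by (simp add: fadd_lc)
    show ?thesis unfolding x e wedge_fadd1 Cons wedge_lc1 by (simp add: wl_def fadd_lc)
  qed
qed

definition iterm :: "tvec \<Rightarrow> nat set \<Rightarrow> real \<Rightarrow> nat \<Rightarrow> (nat set \<times> real) list" where
  "iterm x J c i = (if i \<in> J \<and> J \<subseteq> {0..<5} then [(J - {i}, shsgn {i} (J - {i}) * x i * c)] else [])"

definition il :: "tvec \<Rightarrow> (nat set \<times> real) list \<Rightarrow> (nat set \<times> real) list" where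
  "il x xs = concat (map (\<lambda>(J,c). concat (map (iterm x J c) [0..<5])) xs)"

lemma interior_fadd: "interior x (fadd a b) = fadd (interior x a) (interior x b)"
  by (rule ext) (simp add: interior_def fadd_def algebra_simps sum.distrib)
lemma interior_zero: "interior x fzero = fzero"
  by (rule ext) (simp add: interior_def fzero_def)

lemma interior_mono: "interior x (lc [(J,c)]) = lc (concat (map (iterm x J c) [0..<5]))"
proof (rule ext)
  fix I
  have "lc (concat (map (iterm x J c) [0..<5])) I = (\<Sum>i\<leftarrow>[0..<5]. lc (iterm x J c i) I)"
    by (rule lc_concat)
  also have "\<dots> = (\<Sum>i\<in>{0..<5}. lc (iterm x J c i) I)"
    by (simp add: interv_sum_list_conv_sum_set_nat)
  also have "\<dots> = (\<Sum>i\<in>{0..<5}. if i \<in> J \<and> J \<subseteq> {0..<5} \<and> I = J - {i} then shsgn {i} (J - {i}) * x i * c else 0)"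
    by (rule sum.cong) (auto simp: iterm_def lc.simps)
  also have "\<dots> = interior x (lc [(J,c)]) I"
  proof (cases "I \<subseteq> {0..<5}")
    case True
    have "(\<Sum>i\<in>{0..<5}. if i \<in> J \<and> J \<subseteq> {0..<5} \<and> I = J - {i} then shsgn {i} (J - {i}) * x i * c else 0)
        = (\<Sum>i\<in>{0..<5} - I. if i \<in> J \<and> J \<subseteq> {0..<5} \<and> I = J - {i} then shsgn {i} (J - {i}) * x i * c else 0)"
      by (rule sum.mono_neutral_right) auto
    also have "\<dots> = (\<Sum>i\<in>{0..<5} - I. shsgn {i} I * x i * (if insert i I = J then c else 0))"
      apply (rule sum.cong, simp)
      using True by auto
    finally show ?thesis using True by (simp add: interior_def lc.simps)
  next
    case False
    then show ?thesis by (auto simp: interior_def lc.simps subset_iff intro!: sum.neutral)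
  qed
  finally show "interior x (lc [(J,c)]) I = lc (concat (map (iterm x J c) [0..<5])) I" ..
qed

lemma interior_lc: "interior x (lc xs) = lc (il x xs)"
proof (induction xs)
  case Nil then show ?case by (simp add: il_def fzero_lc[symmetric] interior_zero)
next
  case (Cons y xs)
  obtain J c where y: "y = (J,c)" by (cases y)
  show ?case
  proof -
    have e: "lc ((J,c)#xs) = fadd (lc [(J,c)]) (lc xs)" by (simp add: fadd_lc)
    show ?thesis unfolding y e interior_fadd Cons interior_mono by (simp add: il_def fadd_lc)
  qed
qed

definition cntl :: "nat set \<Rightarrow> nat \<Rightarrow> nat" where "cntl L a = card {l\<in>L. l < a}"
lemma cntl_empty[simp]: "cntl {} a = 0" by (simp add: cntl_def)
lemma cntl_insert[simp]: "finite L \<Longrightarrow> b \<notin> L \<Longrightarrow> cntl (insert b L) a = (if b < a then 1 else 0) + cntl L a"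
proof -
  assume f: "finite L" and b: "b \<notin> L"
  have "{l\<in>insert b L. l < a} = (if b < a then insert b {l\<in>L. l < a} else {l\<in>L. l < a})" by auto
  then show ?thesis using f b by (simp add: cntl_def)
qed
lemma shsgn_empty[simp]: "shsgn {} L = 1" by (simp add: shsgn_def)
lemma shsgn_insert[simp]: "finite J \<Longrightarrow> finite L \<Longrightarrow> a \<notin> J \<Longrightarrow> shsgn (insert a J) L = (-1) ^ cntl L a * shsgn J L"
proof -
  assume fJ: "finite J" and fL: "finite L" and a: "a \<notin> J"
  have e: "{(j, l). j \<in> insert a J \<and> l \<in> L \<and> l < j} = ({a} \<times> {l\<in>L. l < a}) \<union> {(j, l). j \<in> J \<and> l \<in> L \<and> l < j}" by auto
  have f2: "finite {(j, l). j \<in> J \<and> l \<in> L \<and> l < j}"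
    by (rule finite_subset[of _ "J \<times> L"]) (auto simp: fJ fL)
  have d: "({a} \<times> {l\<in>L. l < a}) \<inter> {(j, l). j \<in> J \<and> l \<in> L \<and> l < j} = {}" using a by auto
  have "card {(j, l). j \<in> insert a J \<and> l \<in> L \<and> l < j} = card {l\<in>L. l < a} + card {(j, l). j \<in> J \<and> l \<in> L \<and> l < j}"
    unfolding e by (subst card_Un_disjoint) (auto simp: fL f2 d card_cartesian_product)
  then show ?thesis by (simp add: shsgn_def cntl_def power_add)
qed

lemmas lc_ev = lc.simps set_eq_subset

lemma nat2_lc: "nat2 (c0,c1,c2,c3) = lc [({1,2},c0),({1,4},c1),({2,3},-c1),({3,4},c2),({1,3},-c3),({2,4},-c3)]"
  unfolding nat2_def alpha0_def alpha1_def alpha2_def dtheta_def eb_lc wedge_lc fsub_lc sc_lc fadd_lc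
  apply (simp add: wl_def wterm_def)
  apply (subst lc_eq_iff)
  apply (simp add: lc_ev)
  done

lemma "wedge (nat2 (b0,b1,b2,b3)) (nat2 (c0,c1,c2,c3)) = lc [({1,2,3,4}, b0*c2+b2*c0-2*b1*c1 - 2*b3*c3)]"
  unfolding nat2_lc wedge_lc
  apply (simp add: wl_def wterm_def)
  apply (subst lc_eq_iff)
  apply (simp add: lc_ev)
  done

lemma upt5: "[0..<5] = [0::nat,1,2,3,4]" by (simp add: upt_rec)

lemma theta_lc: "theta s = lc [({0}, s)]"
  unfolding theta_def eb_lc sc_lc by simp
lemma ttheta_lc: "ttheta s p = lc [({0}, -2*p*s)]"
  unfolding ttheta_def theta_lc sc_lc by simp
lemma dttheta_lc: "dttheta p = lc [({1,3}, 2*p), ({2,4}, 2*p)]"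
  unfolding dttheta_def dtheta_def eb_lc wedge_lc sc_lc fadd_lc
  by (simp add: wl_def wterm_def)
lemma w22: "wedge (nat2 (b0,b1,b2,b3)) (nat2 (c0,c1,c2,c3)) = lc [({1,2,3,4}, b0*c2+b2*c0-2*b1*c1 - 2*b3*c3)]"
  unfolding nat2_lc wedge_lc
  apply (simp add: wl_def wterm_def)
  apply (subst lc_eq_iff)
  apply (simp add: lc_ev)
  done

lemma dnat2_lc: "dnat2 s K (c0,c1,c2,c3) = lc [({0,1,4}, s*(c0/s\<^sup>2 - c2*K)), ({0,2,3}, -s*(c0/s\<^sup>2 - c2*K)),
   ({0,3,4}, 2*c1*s/s\<^sup>2), ({0,1,2}, -2*K*c1*s)]"
  unfolding dnat2_def theta_lc alpha0_def alpha1_def alpha2_def eb_lc wedge_lc fsub_lc sc_lc fadd_lc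
  apply (simp add: wl_def wterm_def)
  apply (subst lc_eq_iff)
  apply (simp add: lc_ev)
  apply (simp add: algebra_simps)
  done
lemma tw_lc: "wedge (ttheta s p) (nat2 (c0,c1,c2,c3)) = lc [({0,1,2}, -2*p*s*c0), ({0,1,4}, -2*p*s*c1), ({0,2,3}, 2*p*s*c1),
   ({0,3,4}, -2*p*s*c2), ({0,1,3}, 2*p*s*c3), ({0,2,4}, 2*p*s*c3)]"
  unfolding ttheta_lc nat2_lc wedge_lc
  apply (simp add: wl_def wterm_def)
  apply (subst lc_eq_iff)
  apply (simp add: lc_ev)
  done
lemma int_lc: "interior x (nat2 (c0,c1,c2,c3)) = lc [({1}, -c0 * x 2 - c1 * x 4 + c3 * x 3), ({2}, c0 * x 1 + c1 * x 3 + c3 * x 4),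
   ({3}, -c1 * x 2 - c2 * x 4 - c3 * x 1), ({4}, c1 * x 1 + c2 * x 3 - c3 * x 2)]"
  unfolding nat2_lc interior_lc
  apply (simp add: il_def iterm_def upt5 insert_Diff_if)
  apply (subst lc_eq_iff)
  apply (simp add: lc_ev algebra_simps)
  done

lemma ev2: "eval2 (nat2 (c0,c1,c2,c3)) x y = c0*(x 1*y 2-x 2*y 1) + c1*(x 1*y 4-x 4*y 1) - c1*(x 2*y 3-x 3*y 2) + c2*(x 3*y 4-x 4*y 3) - c3*(x 1*y 3-x 3*y 1) - c3*(x 2*y 4-x 4*y 2)"
  unfolding eval2_def int_lc interior_lc
  apply (simp add: il_def iterm_def upt5 insert_Diff_if lc_ev)
  apply (simp add: algebra_simps)
  done

lemma ev1: "eval1 (ttheta s p) x = -2*p*s * x 0"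
  unfolding eval1_def ttheta_lc interior_lc
  by (simp add: il_def iterm_def upt5 insert_Diff_if lc_ev)

lemma lc1_eq: "lc [(S,u)] = lc [(S,v)] \<longleftrightarrow> u = v"
  by (subst lc_eq_iff) (simp add: lc.simps)
lemma lc1_zero: "lc [(S,u)] = fzero \<longleftrightarrow> u = 0"
  by (subst fzero_lc, subst lc_eq_iff) (simp add: lc.simps)

lemma compat_lc: "wedge (wedge (interior x (nat2 (0,0,0,1))) (interior y (nat2 (b0,b1,b2,0)))) (nat2 (c0,c1,c2,0))
  = lc [({1,2,3,4},
     c2*(x 3*(b0*y 1 + b1*y 3) - x 4*(-b0*y 2 - b1*y 4)) + c0*((-x 1)*(b1*y 1 + b2*y 3) - (-x 2)*(-b1*y 2 - b2*y 4))
     + c1*((x 4*(-b1*y 2 - b2*y 4) - (-x 1)*(b0*y 1 + b1*y 3)) - (x 3*(b1*y 1 + b2*y 3) - (-x 2)*(-b0*y 2 - b1*y 4))))]"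
  unfolding int_lc
  unfolding nat2_lc wedge_lc
  apply (simp add: wl_def wterm_def)
  apply (subst lc_eq_iff)
  apply (simp add: lc_ev)
  apply (simp add: algebra_simps)
  done

lemma dtw0: "dtw s K 1 (b0,b1,b2,0) = fzero"
  unfolding dtw_def dttheta_lc nat2_lc ttheta_lc dnat2_lc wedge_lc fsub_lc fzero_lc
  apply (simp add: wl_def wterm_def)
  apply (subst lc_eq_iff)
  apply (simp add: lc_ev)
  done

lemma dtwa: "dtw s K 1 (0,0,0,1) = sc (-2) (wedge (nat2 (0,0,0,1)) (nat2 (0,0,0,1)))"
  unfolding dtw_def dttheta_lc nat2_lc ttheta_lc dnat2_lc wedge_lc fsub_lc sc_lc
  apply (simp add: wl_def wterm_def)
  apply (subst lc_eq_iff)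
  apply (simp add: lc_ev)
  done

lemma dnat2a: "dnat2 s K (0,0,0,1) = fzero"
  unfolding dnat2_lc fzero_lc
  apply (subst lc_eq_iff)
  apply (simp add: lc_ev)
  done

lemma dtth: "dttheta 1 = sc (-2) (nat2 (0,0,0,1))"
  unfolding dttheta_lc nat2_lc sc_lc
  apply (subst lc_eq_iff)
  apply (simp add: lc_ev)
  done

lemma ttww: "wedge (ttheta s p) (lc [({1,2,3,4}, u)]) = lc [({0,1,2,3,4}, -2*p*s*u)]"
  unfolding ttheta_lc wedge_lc
  apply (simp add: wl_def wterm_def)
  apply (subst lc_eq_iff)
  apply (simp add: lc_ev)
  done

lemma int_eq: "interior x (nat2 (0,0,0,1)) = interior y (nat2 (b0,b1,b2,0)) \<longleftrightarrow>
   x 3 = -b0*y 2 - b1*y 4 \<and> x 4 = b0*y 1 + b1*y 3 \<and> -x 1 = -b1*y 2 - b2*y 4 \<and> -x 2 = b1*y 1 + b2*y 3"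
  unfolding int_lc
  apply (subst lc_eq_iff)
  apply (simp add: lc_ev)
  apply (auto simp: algebra_simps)
  done

lemma NH: assumes "s > 0" shows "nearly_hypo s K 1 (0,0,0,1) (b0,b1,b2,b3) (c0,c1,c2,c3) \<longleftrightarrow>
   c0 = K*b1/3 \<and> c1 = (s\<^sup>2*K*b2 - b0)/(6*s\<^sup>2) \<and> c2 = -(b1/(3*s\<^sup>2)) \<and> c3 = 0"
proof -
  have s0: "s \<noteq> 0" "s\<^sup>2 \<noteq> 0" using assms by auto
  have e1: "s * (b0 / s\<^sup>2 - b2 * K) = - (6 * (s * c1)) \<longleftrightarrow> c1 = (s\<^sup>2*K*b2 - b0)/(6*s\<^sup>2)"
  proof -
    have "s * (b0 / s\<^sup>2 - b2 * K) = - (6 * (s * c1)) \<longleftrightarrow> s * (b0 / s\<^sup>2 - b2 * K + 6*c1) = 0"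
      by (simp add: algebra_simps)
    also have "\<dots> \<longleftrightarrow> b0 / s\<^sup>2 - b2 * K + 6*c1 = 0" using s0 by simp
    also have "\<dots> \<longleftrightarrow> c1 = (s\<^sup>2*K*b2 - b0)/(6*s\<^sup>2)" using s0
      by (simp add: field_simps)
    finally show ?thesis .
  qed
  have e2: "- (s * (b0 / s\<^sup>2 - b2 * K)) = 6 * (s * c1) \<longleftrightarrow> c1 = (s\<^sup>2*K*b2 - b0)/(6*s\<^sup>2)"
    using e1 by linarith
  have e3: "2 * b1 * s / s\<^sup>2 = - (6 * (s * c2)) \<longleftrightarrow> c2 = -(b1/(3*s\<^sup>2))"
    using s0 by (simp add: field_simps power2_eq_square) (auto simp: algebra_simps)
  show ?thesis
  unfolding nearly_hypo_def dtwa
  unfolding dnat2_lc tw_lc sc_lc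
  apply (subst lc_eq_iff)
  apply (simp add: lc_ev e1 e2 e3 s0)
  apply auto
  done
qed

lemma SU: assumes "s > 0" shows "nat_su2 s 1 (0,0,0,1) (b0,b1,b2,b3) (c0,c1,c2,c3) \<longleftrightarrow>
   b3 = 0 \<and> c3 = 0 \<and> b1\<^sup>2 - b0*b2 = 1 \<and> c1\<^sup>2 - c0*c2 = 1 \<and> b0*c2+b2*c0-2*b1*c1 = 0 \<and>
   (\<forall>x y. interior x (nat2 (0,0,0,1)) = interior y (nat2 (b0,b1,b2,0)) \<longrightarrow> 0 \<le> eval2 (nat2 (c0,c1,c2,0)) x y)"
proof -
  have s0: "s \<noteq> 0" using assms by auto
  have sc1: "sc (1/2) (lc [({1,2,3,4}, u)]) = lc [({1,2,3,4}, u/2)]" for u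
    by (simp add: sc_lc)
  show ?thesis
    unfolding nat_su2_def su2_def w22 ttww sc1 lc1_eq lc1_zero
    using s0 by (auto simp: power2_eq_square algebra_simps)
qed

lemma C2iff: "(\<forall>x y. interior x (nat2 (0,0,0,1)) = interior y (nat2 (b0,b1,b2,0)) \<longrightarrow> 0 \<le> eval2 (nat2 (c0,c1,c2,0)) x y)
  \<longleftrightarrow> (\<forall>p1 p2 p3 p4. 0 \<le> (c0*b1 - c1*b0)*(p1\<^sup>2+p2\<^sup>2) + (c0*b2 - c2*b0)*(p1*p3+p2*p4) + (c1*b2 - c2*b1)*(p3\<^sup>2+p4\<^sup>2))"
  (is "?L \<longleftrightarrow> ?R")
proof
  assume L: ?L
  show ?R
  proof (intro allI)
    fix p1 p2 p3 p4 :: real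
    define y :: tvec where "y = (\<lambda>i. if i = 1 then p1 else if i = 2 then p2 else if i = 3 then p3 else if i = 4 then p4 else 0)"
    define x :: tvec where "x = (\<lambda>i. if i = 1 then b1*p2 + b2*p4 else if i = 2 then -(b1*p1 + b2*p3) else if i = 3 then -b0*p2 - b1*p4 else if i = 4 then b0*p1 + b1*p3 else 0)"
    have "interior x (nat2 (0,0,0,1)) = interior y (nat2 (b0,b1,b2,0))"
      unfolding int_eq by (simp add: x_def y_def)
    then have "0 \<le> eval2 (nat2 (c0,c1,c2,0)) x y" using L by blast
    also have "eval2 (nat2 (c0,c1,c2,0)) x y = (c0*b1 - c1*b0)*(p1\<^sup>2+p2\<^sup>2) + (c0*b2 - c2*b0)*(p1*p3+p2*p4) + (c1*b2 - c2*b1)*(p3\<^sup>2+p4\<^sup>2)"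
      unfolding ev2 by (simp add: x_def y_def power2_eq_square algebra_simps)
    finally show "0 \<le> (c0*b1 - c1*b0)*(p1\<^sup>2+p2\<^sup>2) + (c0*b2 - c2*b0)*(p1*p3+p2*p4) + (c1*b2 - c2*b1)*(p3\<^sup>2+p4\<^sup>2)" .
  qed
next
  assume R: ?R
  show ?L
  proof (intro allI impI)
    fix x y :: tvec
    assume "interior x (nat2 (0,0,0,1)) = interior y (nat2 (b0,b1,b2,0))"
    then have h: "x 3 = -b0*y 2 - b1*y 4" "x 4 = b0*y 1 + b1*y 3" "-x 1 = -b1*y 2 - b2*y 4" "-x 2 = b1*y 1 + b2*y 3"
      unfolding int_eq by auto
    have "eval2 (nat2 (c0,c1,c2,0)) x y = (c0*b1 - c1*b0)*((y 1)\<^sup>2+(y 2)\<^sup>2) + (c0*b2 - c2*b0)*(y 1*y 3+y 2*y 4) + (c1*b2 - c2*b1)*((y 3)\<^sup>2+(y 4)\<^sup>2)"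
    proof -
      have x1: "x 1 = b1*y 2 + b2*y 4" and x2: "x 2 = -(b1*y 1 + b2*y 3)" using h by linarith+
      show ?thesis unfolding ev2 x1 x2 h(1) h(2) by (simp add: power2_eq_square algebra_simps)
    qed
    then show "0 \<le> eval2 (nat2 (c0,c1,c2,0)) x y" using R by simp
  qed
qed

lemma quad: fixes A B C :: real assumes "A > 0" "4*A*C - B\<^sup>2 \<ge> 0"
  shows "0 \<le> A*p\<^sup>2 + B*p*q + C*q\<^sup>2"
proof -
  have "4*A*(A*p\<^sup>2 + B*p*q + C*q\<^sup>2) = (2*A*p + B*q)\<^sup>2 + (4*A*C - B\<^sup>2)*q\<^sup>2"
    by (simp add: power2_eq_square algebra_simps)
  also have "\<dots> \<ge> 0" using assms by simp
  finally have "0 \<le> 4*A*(A*p\<^sup>2 + B*p*q + C*q\<^sup>2)" .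
  then show ?thesis using assms(1) by (simp add: zero_le_mult_iff)
qed

lemma quad2: fixes A B C :: real assumes "A > 0" "4*A*C - B\<^sup>2 \<ge> 0"
  shows "0 \<le> A*(p1\<^sup>2+p2\<^sup>2) + B*(p1*p3+p2*p4) + C*(p3\<^sup>2+p4\<^sup>2)"
proof -
  have "0 \<le> A*p1\<^sup>2 + B*p1*p3 + C*p3\<^sup>2" "0 \<le> A*p2\<^sup>2 + B*p2*p4 + C*p4\<^sup>2" using quad[OF assms] by auto
  then show ?thesis by (simp add: algebra_simps)
qed

lemma lagr: "4*((c0::real)*b1 - c1*b0)*(c1*b2 - c2*b1) - (c0*b2 - c2*b0)\<^sup>2
   = 4*(b1\<^sup>2-b0*b2)*(c1\<^sup>2-c0*c2) - (b0*c2+b2*c0-2*b1*c1)\<^sup>2"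
  by (simp add: power2_eq_square algebra_simps)

lemma sum5: "(\<Sum>i<(5::nat). f i) = f 0 + f 1 + f 2 + f 3 + (f 4 :: real)"
  by (simp add: eval_nat_numeral)

lemma CP: assumes "s > 0" shows "compatible s 1 (0,0,0,1) (b0,b1,b2,0) (c0,c1,c2,0) \<longleftrightarrow>
  (\<forall>(x::tvec) (y::tvec). x 0 = 0 \<and> y 0 = 0 \<longrightarrow>
     c2*(x 3*(b0*y 1 + b1*y 3) - x 4*(-b0*y 2 - b1*y 4)) + c0*((-x 1)*(b1*y 1 + b2*y 3) - (-x 2)*(-b1*y 2 - b2*y 4))
     + c1*((x 4*(-b1*y 2 - b2*y 4) - (-x 1)*(b0*y 1 + b1*y 3)) - (x 3*(b1*y 1 + b2*y 3) - (-x 2)*(-b0*y 2 - b1*y 4)))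
     = -(x 1*y 1 + x 2*y 2 + x 3*y 3 + x 4*y 4))"
proof -
  have s0: "s \<noteq> 0" using assms by auto
  have r: "sc (can_metric x y) (sc (1/2) (wedge (nat2 (0,0,0,1)) (nat2 (0,0,0,1)))) = lc [({1,2,3,4}, - (x 0*y 0 + x 1*y 1 + x 2*y 2 + x 3*y 3 + x 4*y 4))]" for x y
    unfolding w22 sc_lc can_metric_def sum5 by simp
  show ?thesis
    unfolding compatible_def ev1 compat_lc r lc1_eq using s0 by auto
qed

lemma Gform: fixes x y :: tvec shows "c2*(x 3*(b0*y 1 + b1*y 3) - x 4*(-b0*y 2 - b1*y 4)) + c0*((-x 1)*(b1*y 1 + b2*y 3) - (-x 2)*(-b1*y 2 - b2*y 4))
     + c1*((x 4*(-b1*y 2 - b2*y 4) - (-x 1)*(b0*y 1 + b1*y 3)) - (x 3*(b1*y 1 + b2*y 3) - (-x 2)*(-b0*y 2 - b1*y 4)))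
   = -((c0*b1-c1*b0)*(x 1*y 1+x 2*y 2) + (c1*b2-c2*b1)*(x 3*y 3+x 4*y 4)) + (c1*b1-c0*b2)*(x 1*y 3+x 2*y 4) + (c2*b0-c1*b1)*(x 3*y 1+x 4*y 2)"
  by (simp add: algebra_simps)

lemma CP2: assumes R: "b0*c2+b2*c0-2*b1*c1 = 0" shows
  "(\<forall>(x::tvec) (y::tvec). x 0 = 0 \<and> y 0 = 0 \<longrightarrow>
     c2*(x 3*(b0*y 1 + b1*y 3) - x 4*(-b0*y 2 - b1*y 4)) + c0*((-x 1)*(b1*y 1 + b2*y 3) - (-x 2)*(-b1*y 2 - b2*y 4))
     + c1*((x 4*(-b1*y 2 - b2*y 4) - (-x 1)*(b0*y 1 + b1*y 3)) - (x 3*(b1*y 1 + b2*y 3) - (-x 2)*(-b0*y 2 - b1*y 4)))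
     = -(x 1*y 1 + x 2*y 2 + x 3*y 3 + x 4*y 4))
  \<longleftrightarrow> c0*b1-c1*b0 = 1 \<and> c1*b2-c2*b1 = 1 \<and> c1*b1-c0*b2 = 0"
  (is "?L \<longleftrightarrow> ?R")
proof
  assume L: ?L
  define e :: "nat \<Rightarrow> tvec" where "e j = (\<lambda>i. if i = j then 1 else 0)" for j
  have a: "c0*b1-c1*b0 = 1" using L[rule_format, of "e 1" "e 1"] unfolding Gform by (simp add: e_def)
  have c: "c1*b2-c2*b1 = 1" using L[rule_format, of "e 3" "e 3"] unfolding Gform by (simp add: e_def)
  have d: "c1*b1-c0*b2 = 0" using L[rule_format, of "e 1" "e 3"] unfolding Gform by (simp add: e_def)
  show ?R using a c d by simp
next
  assume ?R
  then have a: "c0*b1-c1*b0 = 1" and c: "c1*b2-c2*b1 = 1" and d: "c1*b1-c0*b2 = 0" by auto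
  have d2: "c2*b0-c1*b1 = 0" using d R by (simp add: algebra_simps)
  show ?L unfolding Gform a c d d2 by (simp add: algebra_simps)
qed

context fixes s K b0 b1 b2 :: real assumes s: "s > 0" begin

lemma AL1: "b0*(-(b1/(3*s\<^sup>2))) + b2*(K*b1/3) - 2*b1*((s\<^sup>2*K*b2 - b0)/(6*s\<^sup>2)) = 0"
  using s by (simp add: field_simps power2_eq_square)

lemma AL2: "36*s^4*(((s\<^sup>2*K*b2 - b0)/(6*s\<^sup>2))\<^sup>2 - (K*b1/3)*(-(b1/(3*s\<^sup>2)))) = (s\<^sup>2*K*b2 - b0)\<^sup>2 + 4*s\<^sup>2*K*b1\<^sup>2"
  using s by (simp add: field_simps power2_eq_square eval_nat_numeral)

lemma AL3: "6*s\<^sup>2*((K*b1/3)*b1 - ((s\<^sup>2*K*b2 - b0)/(6*s\<^sup>2))*b0) = s\<^sup>2*K*(2*b1\<^sup>2 - b0*b2) + b0\<^sup>2"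
  using s by (simp add: field_simps power2_eq_square)

lemma AL4: "6*s\<^sup>2*(((s\<^sup>2*K*b2 - b0)/(6*s\<^sup>2))*b2 - (-(b1/(3*s\<^sup>2)))*b1) = s\<^sup>2*K*b2\<^sup>2 - b0*b2 + 2*b1\<^sup>2"
  using s by (simp add: field_simps power2_eq_square)

lemma AL5: "6*s\<^sup>2*(((s\<^sup>2*K*b2 - b0)/(6*s\<^sup>2))*b1 - (K*b1/3)*b2) = -b1*(s\<^sup>2*K*b2 + b0)"
  using s by (simp add: field_simps power2_eq_square)

end

lemma FIN: fixes s K b0 b1 b2 :: real
  assumes s: "s > 0" and H1: "b1\<^sup>2 - b0*b2 = 1" and H2: "(b0 + s\<^sup>2*K*b2)\<^sup>2 + 4*s\<^sup>2*K = 36*s^4"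
  shows "(s\<^sup>2*K*(b1\<^sup>2+1) + b0\<^sup>2 = 6*s\<^sup>2 \<and> s\<^sup>2*K*b2\<^sup>2 + b1\<^sup>2 + 1 = 6*s\<^sup>2 \<and> b1*(s\<^sup>2*K*b2 + b0) = 0) \<longleftrightarrow>
   ((b2 = - b0 \<and> b1 \<noteq> 0 \<and> b0\<^sup>2 + b1\<^sup>2 = 1 \<and> K = 3 \<and> 1 / s\<^sup>2 = 3) \<or>
        (b2 = - b0 \<and> (b0 = 1 \<or> b0 = -1) \<and> b1 = 0 \<and> s\<^sup>2 * K + 1 = 6 * s\<^sup>2))"
proof
  assume "s\<^sup>2*K*(b1\<^sup>2+1) + b0\<^sup>2 = 6*s\<^sup>2 \<and> s\<^sup>2*K*b2\<^sup>2 + b1\<^sup>2 + 1 = 6*s\<^sup>2 \<and> b1*(s\<^sup>2*K*b2 + b0) = 0"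
  then have P1: "s\<^sup>2*K*(b1\<^sup>2+1) + b0\<^sup>2 = 6*s\<^sup>2" and P2: "s\<^sup>2*K*b2\<^sup>2 + b1\<^sup>2 + 1 = 6*s\<^sup>2"
    and P3: "b1*(s\<^sup>2*K*b2 + b0) = 0" by auto
  have s2: "s\<^sup>2 > 0" using s by simp
  show "(b2 = - b0 \<and> b1 \<noteq> 0 \<and> b0\<^sup>2 + b1\<^sup>2 = 1 \<and> K = 3 \<and> 1 / s\<^sup>2 = 3) \<or>
        (b2 = - b0 \<and> (b0 = 1 \<or> b0 = -1) \<and> b1 = 0 \<and> s\<^sup>2 * K + 1 = 6 * s\<^sup>2)"
  proof (cases "b1 = 0")
    case True
    have h: "b0*b2 = -1" using H1 True by simp
    have q1: "s\<^sup>2*K + b0\<^sup>2 = 6*s\<^sup>2" using P1 True by simp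
    have "b0\<^sup>2 * (s\<^sup>2*K*b2\<^sup>2 + 1) = s\<^sup>2*K*(b0*b2)\<^sup>2 + b0\<^sup>2" by (simp add: power2_eq_square algebra_simps)
    then have "b0\<^sup>2 * (6*s\<^sup>2) = s\<^sup>2*K + b0\<^sup>2" using P2 True h by simp
    then have "b0\<^sup>2 * (6*s\<^sup>2) = 6*s\<^sup>2" using q1 by simp
    then have b0sq: "b0\<^sup>2 = 1" using s2 by simp
    then have b0: "b0 = 1 \<or> b0 = -1" by (simp add: power2_eq_1_iff)
    have b2: "b2 = - b0" using b0 h by auto
    show ?thesis using True b0 b2 q1 b0sq by simp
  next
    case False
    have e: "s\<^sup>2*K*b2 = - b0" using P3 False by simp
    have k9: "4*s\<^sup>2*K = 36*s^4" using H2 e by simp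
    have "s\<^sup>2*K*b1\<^sup>2 = s\<^sup>2*K*(1 + b0*b2)" using H1 by simp
    also have "\<dots> = s\<^sup>2*K + b0*(s\<^sup>2*K*b2)" by (simp add: algebra_simps)
    also have "\<dots> = s\<^sup>2*K - b0\<^sup>2" unfolding e by (simp add: power2_eq_square)
    finally have f1: "s\<^sup>2*K*b1\<^sup>2 = s\<^sup>2*K - b0\<^sup>2" .
    have e2: "s\<^sup>2*K*(b1\<^sup>2+1) = s\<^sup>2*K*b1\<^sup>2 + s\<^sup>2*K" by (simp add: algebra_simps)
    have "2*(s\<^sup>2*K) = 6*s\<^sup>2" using P1 f1 e2 by linarith
    then have "s\<^sup>2*(2*K - 6) = 0" by (simp add: algebra_simps)
    then have K3: "K = 3" using s2 by simp
    then have "12*s\<^sup>2 = 36*s^4" using k9 by simp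
    then have "12*s\<^sup>2 = 36*s\<^sup>2*s\<^sup>2" by (simp add: power2_eq_square eval_nat_numeral)
    then have ss: "s\<^sup>2 = 1/3" using s2 by simp
    have b2: "b2 = - b0" using e K3 ss by simp
    have "b0\<^sup>2 + b1\<^sup>2 = 1" using H1 b2 by (simp add: power2_eq_square)
    moreover have "1 / s\<^sup>2 = 3" unfolding ss by simp
    ultimately show ?thesis using False K3 b2 by simp
  qed
next
  assume "(b2 = - b0 \<and> b1 \<noteq> 0 \<and> b0\<^sup>2 + b1\<^sup>2 = 1 \<and> K = 3 \<and> 1 / s\<^sup>2 = 3) \<or>
        (b2 = - b0 \<and> (b0 = 1 \<or> b0 = -1) \<and> b1 = 0 \<and> s\<^sup>2 * K + 1 = 6 * s\<^sup>2)"
  then show "s\<^sup>2*K*(b1\<^sup>2+1) + b0\<^sup>2 = 6*s\<^sup>2 \<and> s\<^sup>2*K*b2\<^sup>2 + b1\<^sup>2 + 1 = 6*s\<^sup>2 \<and> b1*(s\<^sup>2*K*b2 + b0) = 0"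
  proof
    assume h: "b2 = - b0 \<and> b1 \<noteq> 0 \<and> b0\<^sup>2 + b1\<^sup>2 = 1 \<and> K = 3 \<and> 1 / s\<^sup>2 = 3"
    then have ss: "s\<^sup>2 = 1/3" using s by (simp add: field_simps)
    show ?thesis using h ss by (simp add: power2_eq_square algebra_simps)
  next
    assume h: "b2 = - b0 \<and> (b0 = 1 \<or> b0 = -1) \<and> b1 = 0 \<and> s\<^sup>2 * K + 1 = 6 * s\<^sup>2"
    then show ?thesis by auto
  qed
qed

lemma Qc: fixes s K b0 b1 b2 :: real assumes s: "s > 0" and H1: "b1\<^sup>2 - b0*b2 = 1"
  shows "((s\<^sup>2*K*b2 - b0)/(6*s\<^sup>2))\<^sup>2 - (K*b1/3)*(-(b1/(3*s\<^sup>2))) = 1 \<longleftrightarrow> (b0 + s\<^sup>2 * K * b2)\<^sup>2 + 4 * s\<^sup>2 * K = 36 * s ^ 4"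
proof -
  have s4: "36*s^4 \<noteq> 0" using s by simp
  have b1: "b1\<^sup>2 = 1 + b0*b2" using H1 by simp
  have "(s\<^sup>2*K*b2 - b0)\<^sup>2 + 4*s\<^sup>2*K*b1\<^sup>2 = (b0 + s\<^sup>2 * K * b2)\<^sup>2 + 4 * s\<^sup>2 * K"
    unfolding b1 by (simp add: power2_eq_square algebra_simps)
  then have e: "36*s^4*(((s\<^sup>2*K*b2 - b0)/(6*s\<^sup>2))\<^sup>2 - (K*b1/3)*(-(b1/(3*s\<^sup>2)))) = (b0 + s\<^sup>2 * K * b2)\<^sup>2 + 4 * s\<^sup>2 * K"
    using AL2[OF s, of K b2 b0 b1] by simp
  show ?thesis
  proof
    assume "((s\<^sup>2*K*b2 - b0)/(6*s\<^sup>2))\<^sup>2 - (K*b1/3)*(-(b1/(3*s\<^sup>2))) = 1"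
    then show "(b0 + s\<^sup>2 * K * b2)\<^sup>2 + 4 * s\<^sup>2 * K = 36 * s ^ 4" using e by simp
  next
    assume h: "(b0 + s\<^sup>2 * K * b2)\<^sup>2 + 4 * s\<^sup>2 * K = 36 * s ^ 4"
    have "36*s^4*(((s\<^sup>2*K*b2 - b0)/(6*s\<^sup>2))\<^sup>2 - (K*b1/3)*(-(b1/(3*s\<^sup>2)))) = 36*s^4*1" using e h by simp
    then show "((s\<^sup>2*K*b2 - b0)/(6*s\<^sup>2))\<^sup>2 - (K*b1/3)*(-(b1/(3*s\<^sup>2))) = 1" using s4 by (metis mult_left_cancel)
  qed
qed

lemma Apos: fixes s K b0 b1 b2 :: real assumes s: "s > 0" and H1: "b1\<^sup>2 - b0*b2 = 1"
  shows "(K*b1/3)*b1 - ((s\<^sup>2*K*b2 - b0)/(6*s\<^sup>2))*b0 > 0 \<longleftrightarrow> K > - (b0\<^sup>2 / (s\<^sup>2 * (1 + b1\<^sup>2)))"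
proof -
  have s6: "6*s\<^sup>2 > 0" using s by simp
  have D: "s\<^sup>2 * (1 + b1\<^sup>2) > 0" using s by (simp add: add_pos_nonneg)
  have e: "6*s\<^sup>2*((K*b1/3)*b1 - ((s\<^sup>2*K*b2 - b0)/(6*s\<^sup>2))*b0) = K*(s\<^sup>2 * (1 + b1\<^sup>2)) + b0\<^sup>2"
    using AL3[OF s, of K b1 b2 b0] H1 by (simp add: algebra_simps)
  have "(K*b1/3)*b1 - ((s\<^sup>2*K*b2 - b0)/(6*s\<^sup>2))*b0 > 0 \<longleftrightarrow> 6*s\<^sup>2*((K*b1/3)*b1 - ((s\<^sup>2*K*b2 - b0)/(6*s\<^sup>2))*b0) > 0"
    using s6 by (simp add: zero_less_mult_iff)
  also have "\<dots> \<longleftrightarrow> K*(s\<^sup>2 * (1 + b1\<^sup>2)) + b0\<^sup>2 > 0" unfolding e ..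
  also have "\<dots> \<longleftrightarrow> - b0\<^sup>2 < K*(s\<^sup>2 * (1 + b1\<^sup>2))" by linarith
  also have "\<dots> \<longleftrightarrow> (- b0\<^sup>2) / (s\<^sup>2 * (1 + b1\<^sup>2)) < K" using pos_divide_less_eq[OF D, of "-b0\<^sup>2" K] by simp
  also have "\<dots> \<longleftrightarrow> K > - (b0\<^sup>2 / (s\<^sup>2 * (1 + b1\<^sup>2)))" by (simp only: minus_divide_left)
  finally show ?thesis .
qed

context fixes s K b0 b1 b2 c0 c1 c2 :: real
  assumes s: "s > 0" and C0: "c0 = K*b1/3" and C1: "c1 = (s\<^sup>2*K*b2 - b0)/(6*s\<^sup>2)" and C2: "c2 = -(b1/(3*s\<^sup>2))"
begin

lemma R0: "b0*c2+b2*c0-2*b1*c1 = 0"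
  unfolding C0 C1 C2 using AL1[OF s] by simp

lemma Qc': "b1\<^sup>2 - b0*b2 = 1 \<Longrightarrow> c1\<^sup>2 - c0*c2 = 1 \<longleftrightarrow> (b0 + s\<^sup>2 * K * b2)\<^sup>2 + 4 * s\<^sup>2 * K = 36 * s ^ 4"
  unfolding C0 C1 C2 using Qc[OF s] by simp

lemma Apos': "b1\<^sup>2 - b0*b2 = 1 \<Longrightarrow> c0*b1 - c1*b0 > 0 \<longleftrightarrow> K > - (b0\<^sup>2 / (s\<^sup>2 * (1 + b1\<^sup>2)))"
  unfolding C0 C1 using Apos[OF s] by simp

lemma part2c: assumes H1: "b1\<^sup>2 - b0*b2 = 1" and H2: "(b0 + s\<^sup>2 * K * b2)\<^sup>2 + 4 * s\<^sup>2 * K = 36 * s ^ 4"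
  and H3: "K > - (b0\<^sup>2 / (s\<^sup>2 * (1 + b1\<^sup>2)))"
  shows "nat_su2 s 1 (0,0,0,1) (b0,b1,b2,0) (c0,c1,c2,0)"
proof -
  have Q: "c1\<^sup>2 - c0*c2 = 1" using Qc' H1 H2 by simp
  have A: "c0*b1 - c1*b0 > 0" using Apos' H1 H3 by simp
  have L: "4*(c0*b1 - c1*b0)*(c1*b2 - c2*b1) - (c0*b2 - c2*b0)\<^sup>2 = 4"
    using lagr[of c0 b1 c1 b0 b2 c2] H1 Q R0 by simp
  have "\<forall>p1 p2 p3 p4. 0 \<le> (c0*b1 - c1*b0)*(p1\<^sup>2+p2\<^sup>2) + (c0*b2 - c2*b0)*(p1*p3+p2*p4) + (c1*b2 - c2*b1)*(p3\<^sup>2+p4\<^sup>2)"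
    using quad2[OF A] L by simp
  then have C2': "\<forall>x y. interior x (nat2 (0,0,0,1)) = interior y (nat2 (b0,b1,b2,0)) \<longrightarrow> 0 \<le> eval2 (nat2 (c0,c1,c2,0)) x y"
    using C2iff by blast
  show ?thesis unfolding SU[OF s] using H1 Q R0 C2' by simp
qed

lemma part1c: assumes su: "nat_su2 s 1 (0,0,0,1) (b0,b1,b2,0) (c0,c1,c2,0)"
  shows "b1\<^sup>2 - b0*b2 = 1 \<and> (b0 + s\<^sup>2 * K * b2)\<^sup>2 + 4 * s\<^sup>2 * K = 36 * s ^ 4 \<and> K > - (b0\<^sup>2 / (s\<^sup>2 * (1 + b1\<^sup>2)))"
proof -
  have S: "b1\<^sup>2 - b0*b2 = 1 \<and> c1\<^sup>2 - c0*c2 = 1 \<and> b0*c2+b2*c0-2*b1*c1 = 0 \<and>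
   (\<forall>x y. interior x (nat2 (0,0,0,1)) = interior y (nat2 (b0,b1,b2,0)) \<longrightarrow> 0 \<le> eval2 (nat2 (c0,c1,c2,0)) x y)"
    using su unfolding SU[OF s] by simp
  then have H1: "b1\<^sup>2 - b0*b2 = 1" and Q: "c1\<^sup>2 - c0*c2 = 1" and R: "b0*c2+b2*c0-2*b1*c1 = 0" by auto
  have H2: "(b0 + s\<^sup>2 * K * b2)\<^sup>2 + 4 * s\<^sup>2 * K = 36 * s ^ 4" using Qc' H1 Q by simp
  have "\<forall>p1 p2 p3 p4. 0 \<le> (c0*b1 - c1*b0)*(p1\<^sup>2+p2\<^sup>2) + (c0*b2 - c2*b0)*(p1*p3+p2*p4) + (c1*b2 - c2*b1)*(p3\<^sup>2+p4\<^sup>2)"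
    using S C2iff by blast
  from this[rule_format, of 1 0 0 0] have A0: "0 \<le> c0*b1 - c1*b0" by simp
  have L: "4*(c0*b1 - c1*b0)*(c1*b2 - c2*b1) - (c0*b2 - c2*b0)\<^sup>2 = 4"
    using lagr[of c0 b1 c1 b0 b2 c2] H1 Q R by simp
  have "c0*b1 - c1*b0 \<noteq> 0"
  proof
    assume "c0*b1 - c1*b0 = 0"
    then have "- (c0*b2 - c2*b0)\<^sup>2 = 4" using L by simp
    moreover have "(c0*b2 - c2*b0)\<^sup>2 \<ge> 0" by simp
    ultimately show False by linarith
  qed
  then have "c0*b1 - c1*b0 > 0" using A0 by linarith
  then have H3: "K > - (b0\<^sup>2 / (s\<^sup>2 * (1 + b1\<^sup>2)))" using Apos' H1 by simp
  show ?thesis using H1 H2 H3 by simp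
qed

lemma part4c: assumes H1: "b1\<^sup>2 - b0*b2 = 1" and H2: "(b0 + s\<^sup>2 * K * b2)\<^sup>2 + 4 * s\<^sup>2 * K = 36 * s ^ 4"
  shows "compatible s 1 (0,0,0,1) (b0,b1,b2,0) (c0,c1,c2,0) \<longleftrightarrow>
        (b2 = - b0 \<and> b1 \<noteq> 0 \<and> b0\<^sup>2 + b1\<^sup>2 = 1 \<and> K = 3 \<and> 1 / s\<^sup>2 = 3) \<or>
        (b2 = - b0 \<and> (b0 = 1 \<or> b0 = -1) \<and> b1 = 0 \<and> s\<^sup>2 * K + 1 = 6 * s\<^sup>2)"
proof -
  have s6: "6*s\<^sup>2 \<noteq> 0" using s by simp
  have a: "6*s\<^sup>2*(c0*b1 - c1*b0) = s\<^sup>2*K*(b1\<^sup>2+1) + b0\<^sup>2"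
    using AL3[OF s, of K b1 b2 b0] H1 unfolding C0 C1 by (simp add: algebra_simps)
  have c: "6*s\<^sup>2*(c1*b2 - c2*b1) = s\<^sup>2*K*b2\<^sup>2 + b1\<^sup>2 + 1"
    using AL4[OF s, of K b2 b0 b1] H1 unfolding C1 C2 by (simp add: algebra_simps)
  have d: "6*s\<^sup>2*(c1*b1 - c0*b2) = -b1*(s\<^sup>2*K*b2 + b0)"
    using AL5[OF s, of K b2 b0 b1] unfolding C0 C1 by simp
  have ea: "c0*b1 - c1*b0 = 1 \<longleftrightarrow> s\<^sup>2*K*(b1\<^sup>2+1) + b0\<^sup>2 = 6*s\<^sup>2"
    using a s6 by (metis mult.right_neutral mult_left_cancel)
  have ec: "c1*b2 - c2*b1 = 1 \<longleftrightarrow> s\<^sup>2*K*b2\<^sup>2 + b1\<^sup>2 + 1 = 6*s\<^sup>2"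
    using c s6 by (metis mult.right_neutral mult_left_cancel)
  have ed: "c1*b1 - c0*b2 = 0 \<longleftrightarrow> b1*(s\<^sup>2*K*b2 + b0) = 0"
    using d s6 by (metis mult_eq_0_iff neg_equal_0_iff_equal mult_minus_left)
  show ?thesis
    unfolding CP[OF s] CP2[OF R0] ea ec ed using FIN[OF s H1 H2] by simp
qed

end

theorem mainTheorem8:
  fixes s K :: real
  assumes "s > 0"
  shows
   "(\<forall>b c. nat_su2 s 1 (0, 0, 0, 1) b c \<longrightarrow>
       (nearly_hypo s K 1 (0, 0, 0, 1) b c \<longleftrightarrow>
         (\<exists>b0 b1 b2. b1\<^sup>2 - b0 * b2 = 1 \<and> (b0 + s\<^sup>2 * K * b2)\<^sup>2 + 4 * s\<^sup>2 * K = 36 * s ^ 4 \<and>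
            K > - (b0\<^sup>2 / (s\<^sup>2 * (1 + b1\<^sup>2))) \<and>
            b = (b0, b1, b2, 0) \<and>
            c = (K * b1 / 3, (s\<^sup>2 * K * b2 - b0) / (6 * s\<^sup>2), - (b1 / (3 * s\<^sup>2)), 0)))) \<and>
    (\<forall>b0 b1 b2. b1\<^sup>2 - b0 * b2 = 1 \<and> (b0 + s\<^sup>2 * K * b2)\<^sup>2 + 4 * s\<^sup>2 * K = 36 * s ^ 4 \<and>
            K > - (b0\<^sup>2 / (s\<^sup>2 * (1 + b1\<^sup>2))) \<longrightarrow>
       nat_su2 s 1 (0, 0, 0, 1) (b0, b1, b2, 0)
          (K * b1 / 3, (s\<^sup>2 * K * b2 - b0) / (6 * s\<^sup>2), - (b1 / (3 * s\<^sup>2)), 0)) \<and>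
    (\<forall>b c. nat_su2 s 1 (0, 0, 0, 1) b c \<and> nearly_hypo s K 1 (0, 0, 0, 1) b c \<longrightarrow>
       contact_hypo s K 1 (0, 0, 0, 1) b c \<and> double_hypo s K 1 (0, 0, 0, 1) b c) \<and>
    (\<forall>b0 b1 b2. b1\<^sup>2 - b0 * b2 = 1 \<and> (b0 + s\<^sup>2 * K * b2)\<^sup>2 + 4 * s\<^sup>2 * K = 36 * s ^ 4 \<and>
            K > - (b0\<^sup>2 / (s\<^sup>2 * (1 + b1\<^sup>2))) \<longrightarrow>
       (compatible s 1 (0, 0, 0, 1) (b0, b1, b2, 0)
          (K * b1 / 3, (s\<^sup>2 * K * b2 - b0) / (6 * s\<^sup>2), - (b1 / (3 * s\<^sup>2)), 0) \<longleftrightarrow>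
        (b2 = - b0 \<and> b1 \<noteq> 0 \<and> b0\<^sup>2 + b1\<^sup>2 = 1 \<and> K = 3 \<and> 1 / s\<^sup>2 = 3) \<or>
        (b2 = - b0 \<and> (b0 = 1 \<or> b0 = -1) \<and> b1 = 0 \<and> s\<^sup>2 * K + 1 = 6 * s\<^sup>2)))"
proof (intro conjI)
  note s = assms
  show "\<forall>b c. nat_su2 s 1 (0, 0, 0, 1) b c \<longrightarrow>
       (nearly_hypo s K 1 (0, 0, 0, 1) b c \<longleftrightarrow>
         (\<exists>b0 b1 b2. b1\<^sup>2 - b0 * b2 = 1 \<and> (b0 + s\<^sup>2 * K * b2)\<^sup>2 + 4 * s\<^sup>2 * K = 36 * s ^ 4 \<and>
            K > - (b0\<^sup>2 / (s\<^sup>2 * (1 + b1\<^sup>2))) \<and>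
            b = (b0, b1, b2, 0) \<and>
            c = (K * b1 / 3, (s\<^sup>2 * K * b2 - b0) / (6 * s\<^sup>2), - (b1 / (3 * s\<^sup>2)), 0)))"
  proof (intro allI impI)
    fix b c :: coeffs
    assume su: "nat_su2 s 1 (0, 0, 0, 1) b c"
    obtain b0 b1 b2 b3 where b: "b = (b0,b1,b2,b3)" by (cases b) auto
    obtain c0 c1 c2 c3 where c: "c = (c0,c1,c2,c3)" by (cases c) auto
    have b3: "b3 = 0" using su unfolding b c SU[OF s] by simp
    show "nearly_hypo s K 1 (0, 0, 0, 1) b c \<longleftrightarrow>
         (\<exists>b0 b1 b2. b1\<^sup>2 - b0 * b2 = 1 \<and> (b0 + s\<^sup>2 * K * b2)\<^sup>2 + 4 * s\<^sup>2 * K = 36 * s ^ 4 \<and>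
            K > - (b0\<^sup>2 / (s\<^sup>2 * (1 + b1\<^sup>2))) \<and>
            b = (b0, b1, b2, 0) \<and>
            c = (K * b1 / 3, (s\<^sup>2 * K * b2 - b0) / (6 * s\<^sup>2), - (b1 / (3 * s\<^sup>2)), 0))"
    proof
      assume nh: "nearly_hypo s K 1 (0, 0, 0, 1) b c"
      have C: "c0 = K*b1/3" "c1 = (s\<^sup>2*K*b2 - b0)/(6*s\<^sup>2)" "c2 = -(b1/(3*s\<^sup>2))" "c3 = 0"
        using nh unfolding b c NH[OF s] by auto
      have su': "nat_su2 s 1 (0,0,0,1) (b0,b1,b2,0) (c0,c1,c2,0)" using su unfolding b c b3 C(4) .
      have P: "b1\<^sup>2 - b0*b2 = 1 \<and> (b0 + s\<^sup>2 * K * b2)\<^sup>2 + 4 * s\<^sup>2 * K = 36 * s ^ 4 \<and> K > - (b0\<^sup>2 / (s\<^sup>2 * (1 + b1\<^sup>2)))"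
        using part1c[OF s C(1) C(2) C(3) su'] .
      show "\<exists>b0 b1 b2. b1\<^sup>2 - b0 * b2 = 1 \<and> (b0 + s\<^sup>2 * K * b2)\<^sup>2 + 4 * s\<^sup>2 * K = 36 * s ^ 4 \<and>
            K > - (b0\<^sup>2 / (s\<^sup>2 * (1 + b1\<^sup>2))) \<and>
            b = (b0, b1, b2, 0) \<and>
            c = (K * b1 / 3, (s\<^sup>2 * K * b2 - b0) / (6 * s\<^sup>2), - (b1 / (3 * s\<^sup>2)), 0)"
        using P b c b3 C by blast
    next
      assume "\<exists>b0 b1 b2. b1\<^sup>2 - b0 * b2 = 1 \<and> (b0 + s\<^sup>2 * K * b2)\<^sup>2 + 4 * s\<^sup>2 * K = 36 * s ^ 4 \<and>
            K > - (b0\<^sup>2 / (s\<^sup>2 * (1 + b1\<^sup>2))) \<and>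
            b = (b0, b1, b2, 0) \<and>
            c = (K * b1 / 3, (s\<^sup>2 * K * b2 - b0) / (6 * s\<^sup>2), - (b1 / (3 * s\<^sup>2)), 0)"
      then obtain b0' b1' b2' where bb: "b = (b0', b1', b2', 0)" and
        cc: "c = (K * b1' / 3, (s\<^sup>2 * K * b2' - b0') / (6 * s\<^sup>2), - (b1' / (3 * s\<^sup>2)), 0)" by blast
      show "nearly_hypo s K 1 (0, 0, 0, 1) b c" unfolding bb cc NH[OF s] by simp
    qed
  qed
  show "\<forall>b0 b1 b2. b1\<^sup>2 - b0 * b2 = 1 \<and> (b0 + s\<^sup>2 * K * b2)\<^sup>2 + 4 * s\<^sup>2 * K = 36 * s ^ 4 \<and>
            K > - (b0\<^sup>2 / (s\<^sup>2 * (1 + b1\<^sup>2))) \<longrightarrow>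
       nat_su2 s 1 (0, 0, 0, 1) (b0, b1, b2, 0)
          (K * b1 / 3, (s\<^sup>2 * K * b2 - b0) / (6 * s\<^sup>2), - (b1 / (3 * s\<^sup>2)), 0)"
    using part2c[OF s refl refl refl] by blast
  show "\<forall>b c. nat_su2 s 1 (0, 0, 0, 1) b c \<and> nearly_hypo s K 1 (0, 0, 0, 1) b c \<longrightarrow>
       contact_hypo s K 1 (0, 0, 0, 1) b c \<and> double_hypo s K 1 (0, 0, 0, 1) b c"
  proof (intro allI impI)
    fix b c :: coeffs
    assume h: "nat_su2 s 1 (0, 0, 0, 1) b c \<and> nearly_hypo s K 1 (0, 0, 0, 1) b c"
    obtain b0 b1 b2 b3 where b: "b = (b0,b1,b2,b3)" by (cases b) auto
    obtain c0 c1 c2 c3 where c: "c = (c0,c1,c2,c3)" by (cases c) auto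
    have b3: "b3 = 0" using h unfolding b c SU[OF s] by simp
    have c3: "c3 = 0" using h unfolding b c NH[OF s] by simp
    show "contact_hypo s K 1 (0, 0, 0, 1) b c \<and> double_hypo s K 1 (0, 0, 0, 1) b c"
      unfolding contact_hypo_def double_hypo_def hypo_def b c b3 c3
      using h dtth dtw0 dnat2a unfolding b c b3 c3 by simp
  qed
  show "\<forall>b0 b1 b2. b1\<^sup>2 - b0 * b2 = 1 \<and> (b0 + s\<^sup>2 * K * b2)\<^sup>2 + 4 * s\<^sup>2 * K = 36 * s ^ 4 \<and>
            K > - (b0\<^sup>2 / (s\<^sup>2 * (1 + b1\<^sup>2))) \<longrightarrow>
       (compatible s 1 (0, 0, 0, 1) (b0, b1, b2, 0)
          (K * b1 / 3, (s\<^sup>2 * K * b2 - b0) / (6 * s\<^sup>2), - (b1 / (3 * s\<^sup>2)), 0) \<longleftrightarrow>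
        (b2 = - b0 \<and> b1 \<noteq> 0 \<and> b0\<^sup>2 + b1\<^sup>2 = 1 \<and> K = 3 \<and> 1 / s\<^sup>2 = 3) \<or>
        (b2 = - b0 \<and> (b0 = 1 \<or> b0 = -1) \<and> b1 = 0 \<and> s\<^sup>2 * K + 1 = 6 * s\<^sup>2))"
    using part4c[OF s refl refl refl] by blast
qed

end
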